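(* For all $m\in\mathbb{N}$, $\delta\in(0,1)$ and $\boldsymbol{\mu}\in\Delta_\mathbb{N}$, if $\boldsymbol{X}=(X_1,\dots,X_m)\sim\boldsymbol{\mu}^m$ and $\widehat{\boldsymbol{\mu}}_m$ is the empirical measure of $\boldsymbol{X}$, then with probability at least $1-\delta$, $$\|\widehat{\boldsymbol{\mu}}_m-\boldsymbol{\mu}\|_{TV}\le \Phi_m(\widehat{\boldsymbol{\mu}}_m)+3\sqrt{\frac{\log(2/\delta)}{2m}}.$$ Moreover, $\mathbb{E}\,\|\widehat{\boldsymbol{\mu}}_m-\boldsymbol{\mu}\|_{TV}\le \mathbb{E}\,\Phi_m(\widehat{\boldsymbol{\mu}}_m)$.
   Context: $\mathbb{N}=\{1,2,3,\dots\}$. $\Delta_\mathbb{N}$ is the set of probability distributions on $\mathbb{N}$, viewed as sequences $\boldsymbol{\mu}\in[0,1]^\mathbb{N}$ with $\sum_i\boldsymbol{\mu}(i)=1$. For $\boldsymbol{X}=(X_1,\dots,X_m)$ drawn i.i.d. from $\boldsymbol{\mu}$, the empirical measure is $\widehat{\boldsymbol{\mu}}_m(i)=\frac1m\sum_{t=1}^m\mathbb{I}\{X_t=i\}$. Total variation: $\|\boldsymbol{\mu}-\boldsymbol{\nu}\|_{TV}=\frac12\sum_{i\in\mathbb{N}}|\boldsymbol{\mu}(i)-\boldsymbol{\nu}(i)|$. The half-norm is $\|\boldsymbol{\mu}\|_{1/2}=\left(\sum_{i}\sqrt{\boldsymbol{\mu}(i)}\right)^2$ (possibly infinite). $\Phi_m(\widehat{\boldsymbol{\mu}}_m):=\frac{1}{\sqrt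 m}\|\widehat{\boldsymbol{\mu}}_m\|_{1/2}^{1/2}=\frac1{\sqrt m}\sum_{j\in\mathbb{N}}\sqrt{\widehat{\boldsymbol{\mu}}_m(j)}$. $\log$ is the natural logarithm. *)

theory Defs
  imports "HOL-Analysis.Analysis" "HOL-Probability.Probability"
begin

text \<open>Empirical measure of the sample X_0,...,X_{m-1} (the paper's X_1..X_m).\<close>
definition emp_measure :: "nat \<Rightarrow> (nat \<Rightarrow> nat) \<Rightarrow> nat \<Rightarrow> real" where
  "emp_measure m X i = real (card {t \<in> {..<m}. X t = i}) / real m"

definition tv_dist :: "(nat \<Rightarrow> real) \<Rightarrow> (nat \<Rightarrow> real) \<Rightarrow> real" where
  "tv_dist \<mu> \<nu> = (1/2) * (\<Sum>i. \<bar>\<mu> i - \<nu> i\<bar>)"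

definition Phi :: "nat \<Rightarrow> (nat \<Rightarrow> real) \<Rightarrow> real" where
  "Phi m \<nu> = (1 / sqrt (real m)) * (\<Sum>j. sqrt (\<nu> j))"

end

theory Submission
  imports Defs
begin


lemma pmf_integrable_bounded:
  fixes f :: "'a \<Rightarrow> real"
  assumes "\<And>z. \<bar>f z\<bar> \<le> B"
  shows "integrable (measure_pmf M) f"
  by (rule measure_pmf.integrable_const_bound[where B=B]) (use assms in auto)

lemma exp_abs_le:
  fixes f :: "'a \<Rightarrow> real"
  assumes "\<And>z. \<bar>f z\<bar> \<le> B"
  shows "\<bar>measure_pmf.expectation M f\<bar> \<le> B"
proof -
  have "\<bar>measure_pmf.expectation M f\<bar> \<le> measure_pmf.expectation M (\<lambda>z. \<bar>f z\<bar>)"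
    using integral_norm_bound[of M f] by simp
  also have "\<dots> \<le> measure_pmf.expectation M (\<lambda>z. B)"
    by (intro integral_mono pmf_integrable_bounded[of _ B]) (use assms in \<open>auto intro: order.trans[OF abs_ge_zero]\<close>)
  finally show ?thesis by simp
qed

lemma pair_exp:
  fixes f :: "'a \<times> 'b \<Rightarrow> real"
  assumes B: "\<And>z. \<bar>f z\<bar> \<le> B"
  shows "measure_pmf.expectation (pair_pmf A C) f =
         measure_pmf.expectation A (\<lambda>a. measure_pmf.expectation C (\<lambda>b. f (a,b)))"
proof -
  define g where "g z = f z + B" for z
  have g0: "g z \<ge> 0" for z using B[of z] by (auto simp: g_def)
  have gB: "\<bar>g z\<bar> \<le> 2*B" for z using B[of z] by (auto simp: g_def)
  have ig: "integrable (measure_pmf M) (h :: _ \<Rightarrow> real)" if "\<And>z. \<bar>h z\<bar> \<le> 2*B" for M h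
    by (rule pmf_integrable_bounded[OF that])
  have inner0: "measure_pmf.expectation C (\<lambda>b. g (a,b)) \<ge> 0" for a
    by (intro integral_nonneg_AE) (auto simp: g0)
  have innerB: "\<bar>measure_pmf.expectation C (\<lambda>b. g (a,b))\<bar> \<le> 2*B" for a
    by (rule exp_abs_le) (use gB in auto)
  have "ennreal (measure_pmf.expectation (pair_pmf A C) g) = (\<integral>\<^sup>+z. g z \<partial>pair_pmf A C)"
    by (rule nn_integral_eq_integral[symmetric]) (auto intro: ig gB simp: g0)
  also have "\<dots> = (\<integral>\<^sup>+a. \<integral>\<^sup>+b. g (a,b) \<partial>C \<partial>A)"
    by (rule nn_integral_pair_pmf')
  also have "\<dots> = (\<integral>\<^sup>+a. ennreal (measure_pmf.expectation C (\<lambda>b. g (a,b))) \<partial>A)"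
    by (intro nn_integral_cong nn_integral_eq_integral) (auto intro: ig gB simp: g0)
  also have "\<dots> = ennreal (measure_pmf.expectation A (\<lambda>a. measure_pmf.expectation C (\<lambda>b. g (a,b))))"
    by (intro nn_integral_eq_integral) (auto intro: ig innerB simp: inner0)
  finally have eq: "measure_pmf.expectation (pair_pmf A C) g = 
      measure_pmf.expectation A (\<lambda>a. measure_pmf.expectation C (\<lambda>b. g (a,b)))"
    by (subst (asm) ennreal_inj) (auto intro!: integral_nonneg_AE simp: g0 inner0)
  have if': "integrable (measure_pmf M) f" for M by (rule pmf_integrable_bounded[OF B])
  have "measure_pmf.expectation (pair_pmf A C) g = measure_pmf.expectation (pair_pmf A C) f + B"
    unfolding g_def by (subst Bochner_Integration.integral_add) (auto intro: if')
  moreover have "measure_pmf.expectation C (\<lambda>b. g (a,b)) = measure_pmf.expectation C (\<lambda>b. f (a,b)) + B" for a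
    unfolding g_def by (subst Bochner_Integration.integral_add) (auto intro: pmf_integrable_bounded[of _ B] B)
  moreover have "measure_pmf.expectation A (\<lambda>a. measure_pmf.expectation C (\<lambda>b. f (a,b)) + B)
      = measure_pmf.expectation A (\<lambda>a. measure_pmf.expectation C (\<lambda>b. f (a,b))) + B"
  proof -
    have "\<bar>measure_pmf.expectation C (\<lambda>b. f (a,b))\<bar> \<le> B" for a
      by (rule exp_abs_le) (use B in auto)
    thus ?thesis by (subst Bochner_Integration.integral_add) (auto intro: pmf_integrable_bounded)
  qed
  ultimately show ?thesis using eq by simp
qed

lemma mcd_mgf:
  fixes f :: "('i \<Rightarrow> 'a) \<Rightarrow> real" and p :: "'i \<Rightarrow> 'a pmf"
  assumes "finite I" "l > 0" "c \<ge> 0"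
    and "\<And>X i y. i \<in> I \<Longrightarrow> \<bar>f (X(i:=y)) - f X\<bar> \<le> c"
    and "\<And>X. \<bar>f X\<bar> \<le> B"
  shows "(\<integral>\<^sup>+X. ennreal (exp (l * (f X - measure_pmf.expectation (Pi_pmf I d p) f))) \<partial>Pi_pmf I d p)
          \<le> ennreal (exp (l\<^sup>2 * c\<^sup>2 * real (card I) / 8))"
  using assms(1,4,5)
proof (induction I arbitrary: f rule: finite_induct)
  case empty
  then show ?case by simp
next
  case (insert i I f)
  define M where "M = Pi_pmf I d p"
  define Q where "Q = p i"
  have Pins: "Pi_pmf (insert i I) d p = map_pmf (\<lambda>(y,X). X(i:=y)) (pair_pmf Q M)"
    unfolding M_def Q_def by (rule Pi_pmf_insert) (use insert.hyps in auto)
  define g where "g y X = f (X(i:=y))" for y X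
  define h where "h y = measure_pmf.expectation M (g y)" for y
  have fB: "\<bar>f X\<bar> \<le> B" for X by (rule insert.prems(2))
  have gB: "\<bar>g y X\<bar> \<le> B" for y X unfolding g_def by (rule fB)
  have hB: "\<bar>h y\<bar> \<le> B" for y unfolding h_def by (rule exp_abs_le) (rule gB)
  define F where "F = measure_pmf.expectation (Pi_pmf (insert i I) d p) f"
  have EF: "F = measure_pmf.expectation Q h"
  proof -
    have "F = measure_pmf.expectation (pair_pmf Q M) (\<lambda>z. f (case z of (y,X) \<Rightarrow> X(i:=y)))"
      unfolding F_def Pins by simp
    also have "\<dots> = measure_pmf.expectation Q (\<lambda>y. measure_pmf.expectation M (\<lambda>X. f (X(i:=y))))"
      using pair_exp[of "\<lambda>z. f (case z of (y,X) \<Rightarrow> X(i:=y))" B Q M] fB by simp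
    finally show ?thesis unfolding h_def g_def by simp
  qed
  have gdiff: "\<bar>g y (X(j:=z)) - g y X\<bar> \<le> c" if "j \<in> I" for y X j z
  proof -
    have "i \<noteq> j" using that insert.hyps by auto
    hence "X(j:=z, i:=y) = (X(i:=y))(j:=z)" by (auto simp: fun_eq_iff)
    moreover have "\<bar>f ((X(i:=y))(j:=z)) - f (X(i:=y))\<bar> \<le> c"
      by (rule insert.prems(1)) (use that in simp)
    ultimately show ?thesis by (simp only: g_def)
  qed
  have IH: "(\<integral>\<^sup>+X. ennreal (exp (l * (g y X - h y))) \<partial>M) \<le> ennreal (exp (l\<^sup>2 * c\<^sup>2 * real (card I) / 8))" for y
    unfolding h_def M_def by (rule insert.IH) (use gdiff gB in blast)+
  have hdiff: "h y \<le> h y' + c" for y y'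
  proof -
    have "g y X \<le> g y' X + c" for X
    proof -
      have "\<bar>f ((X(i:=y'))(i:=y)) - f (X(i:=y'))\<bar> \<le> c" by (rule insert.prems(1)) simp
      moreover have "(X(i:=y'))(i:=y) = X(i:=y)" by simp
      ultimately have "\<bar>f (X(i:=y)) - f (X(i:=y'))\<bar> \<le> c" by (simp only:)
      thus ?thesis unfolding g_def by linarith
    qed
    hence "h y \<le> measure_pmf.expectation M (\<lambda>X. g y' X + c)"
      unfolding h_def by (intro integral_mono pmf_integrable_bounded[of _ B] pmf_integrable_bounded[of _ "B + c"])
        (use gB \<open>c \<ge> 0\<close> in \<open>auto intro: order.trans[OF abs_triangle_ineq]\<close>)
    also have "\<dots> = h y' + c" unfolding h_def
      by (subst Bochner_Integration.integral_add) (auto intro: pmf_integrable_bounded[of _ B] gB)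
    finally show ?thesis .
  qed
  define a where "a = Inf (range h)"
  have bdd: "bdd_below (range h)" using hB by (intro bdd_belowI[of _ "-B"]) (use hB in \<open>auto, metis abs_le_iff add.inverse_inverse neg_le_iff_le\<close>)
  have ha: "a \<le> h y" for y unfolding a_def by (rule cInf_lower) (use bdd in auto)
  have hc: "h y \<le> a + c" for y
  proof -
    have "h y - c \<le> a" unfolding a_def by (rule cInf_greatest) (use hdiff in \<open>auto simp: algebra_simps\<close>)
    thus ?thesis by simp
  qed
  interpret H: interval_bounded_random_variable "measure_pmf Q" h a "a + c"
    by unfold_locales (use ha hc in auto)
  have Hoef: "(\<integral>\<^sup>+y. ennreal (exp (l * (h y - F))) \<partial>Q) \<le> ennreal (exp (l\<^sup>2 * c\<^sup>2 / 8))"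
    using H.Hoeffdings_lemma_nn_integral[OF \<open>l > 0\<close>] unfolding EF by simp
  have "(\<integral>\<^sup>+Z. ennreal (exp (l * (f Z - F))) \<partial>Pi_pmf (insert i I) d p)
      = (\<integral>\<^sup>+y. \<integral>\<^sup>+X. ennreal (exp (l * (g y X - F))) \<partial>M \<partial>Q)"
    unfolding Pins by (simp add: nn_integral_pair_pmf' g_def)
  also have "\<dots> = (\<integral>\<^sup>+y. ennreal (exp (l * (h y - F))) * (\<integral>\<^sup>+X. ennreal (exp (l * (g y X - h y))) \<partial>M) \<partial>Q)"
  proof (intro nn_integral_cong)
    fix y
    have "(\<integral>\<^sup>+X. ennreal (exp (l * (g y X - F))) \<partial>M) = 
          (\<integral>\<^sup>+X. ennreal (exp (l * (h y - F))) * ennreal (exp (l * (g y X - h y))) \<partial>M)"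
      by (intro nn_integral_cong) (simp add: ennreal_mult[symmetric] exp_add[symmetric] algebra_simps)
    also have "\<dots> = ennreal (exp (l * (h y - F))) * (\<integral>\<^sup>+X. ennreal (exp (l * (g y X - h y))) \<partial>M)"
      by (rule nn_integral_cmult) auto
    finally show "(\<integral>\<^sup>+X. ennreal (exp (l * (g y X - F))) \<partial>M) = \<dots>" .
  qed
  also have "\<dots> \<le> (\<integral>\<^sup>+y. ennreal (exp (l * (h y - F))) * ennreal (exp (l\<^sup>2 * c\<^sup>2 * real (card I) / 8)) \<partial>Q)"
    by (intro nn_integral_mono mult_left_mono IH) auto
  also have "\<dots> = (\<integral>\<^sup>+y. ennreal (exp (l * (h y - F))) \<partial>Q) * ennreal (exp (l\<^sup>2 * c\<^sup>2 * real (card I) / 8))"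
    by (rule nn_integral_multc) auto
  also have "\<dots> \<le> ennreal (exp (l\<^sup>2 * c\<^sup>2 / 8)) * ennreal (exp (l\<^sup>2 * c\<^sup>2 * real (card I) / 8))"
    by (intro mult_right_mono Hoef) auto
  also have "\<dots> = ennreal (exp (l\<^sup>2 * c\<^sup>2 * real (card (insert i I)) / 8))"
    using insert.hyps by (simp add: ennreal_mult[symmetric] exp_add[symmetric] algebra_simps add_divide_distrib)
  finally show ?case unfolding F_def .
qed

lemma mcdiarmid:
  fixes f :: "('i \<Rightarrow> 'a) \<Rightarrow> real" and p :: "'i \<Rightarrow> 'a pmf"
  assumes "finite I" "I \<noteq> {}" "c > 0" "s > 0"
    and "\<And>X i y. i \<in> I \<Longrightarrow> \<bar>f (X(i:=y)) - f X\<bar> \<le> c"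
    and "\<And>X. \<bar>f X\<bar> \<le> B"
  shows "measure_pmf.prob (Pi_pmf I d p) {X. f X - measure_pmf.expectation (Pi_pmf I d p) f \<ge> s}
           \<le> exp (-2 * s\<^sup>2 / (real (card I) * c\<^sup>2))"
proof -
  define P where "P = Pi_pmf I d p"
  define E where "E = measure_pmf.expectation P f"
  define n where "n = real (card I)"
  have n: "n > 0" using assms(1,2) by (simp add: n_def card_gt_0_iff)
  define l where "l = 4 * s / (n * c\<^sup>2)"
  have l: "l > 0" using n assms by (simp add: l_def)
  have "emeasure (measure_pmf P) {x\<in>UNIV. f x - E \<ge> s} \<le>
      ennreal (exp (-l * s)) * (\<integral>\<^sup>+x. ennreal (exp (l * (f x - E))) * indicator UNIV x \<partial>P)"
    by (rule Chernoff_ineq_nn_integral_ge) (use l in auto)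
  also have "\<dots> = ennreal (exp (-l * s)) * (\<integral>\<^sup>+x. ennreal (exp (l * (f x - E))) \<partial>P)"
    by simp
  also have "\<dots> \<le> ennreal (exp (-l * s)) * ennreal (exp (l\<^sup>2 * c\<^sup>2 * n / 8))"
    unfolding E_def P_def n_def
    by (intro mult_left_mono mcd_mgf[where B=B]) (use assms l in auto)
  also have "\<dots> = ennreal (exp (-2 * s\<^sup>2 / (n * c\<^sup>2)))"
  proof -
    have "-l * s + l\<^sup>2 * c\<^sup>2 * n / 8 = -2 * s\<^sup>2 / (n * c\<^sup>2)"
      using n assms(3) by (simp add: l_def field_simps power2_eq_square)
    thus ?thesis by (simp add: ennreal_mult[symmetric] exp_add[symmetric])
  qed
  finally have "ennreal (measure_pmf.prob P {x. f x - E \<ge> s}) \<le> ennreal (exp (-2 * s\<^sup>2 / (n * c\<^sup>2)))"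
    by (simp add: measure_pmf.emeasure_eq_measure)
  thus ?thesis unfolding P_def E_def n_def by (subst (asm) ennreal_le_iff) auto
qed



lemma pmf_nat_summable: "summable (pmf (\<mu>::nat pmf))" and pmf_nat_suminf_le: "suminf (pmf \<mu>) \<le> 1"
proof -
  have le: "(\<Sum>i<n. pmf \<mu> i) \<le> 1" for n
    using measure_measure_pmf_finite[of "{..<n}" \<mu>] measure_pmf.prob_le_1[of \<mu> "{..<n}"] by simp
  show "summable (pmf \<mu>)" by (rule summableI_nonneg_bounded[OF pmf_nonneg le])
  thus "suminf (pmf \<mu>) \<le> 1" by (rule suminf_le_const[OF _ le])
qed

lemma emp_zero: "j \<notin> X ` {..<m} \<Longrightarrow> emp_measure m X j = 0"
  unfolding emp_measure_def by (auto simp: image_iff)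

lemma emp_nonneg: "emp_measure m X j \<ge> 0"
  unfolding emp_measure_def by simp

lemma emp_sum: assumes "m > 0" shows "(\<Sum>j\<in>X ` {..<m}. emp_measure m X j) = 1"
proof -
  have "real (card {..<m}) = real (\<Sum>j\<in>X ` {..<m}. card {t\<in>{..<m}. X t = j})"
    using sum.image_gen[of "{..<m}" "\<lambda>_. (1::nat)" X] by simp
  thus ?thesis using assms unfolding emp_measure_def by (simp add: sum_divide_distrib[symmetric])
qed

lemma emp_le1: "emp_measure m X j \<le> 1"
proof -
  have "card {t\<in>{..<m}. X t = j} \<le> card {..<m}" by (rule card_mono) auto
  thus ?thesis unfolding emp_measure_def by (cases "m = 0") (auto simp: field_simps)
qed

lemma emp_summable: assumes "g 0 = 0" shows "summable (\<lambda>j. g (emp_measure m X j))"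
  by (rule summable_finite[of "X ` {..<m}"]) (auto simp: emp_zero assms)

lemma emp_upd:
  assumes "i < m" "X i \<noteq> y"
  shows "j \<noteq> X i \<Longrightarrow> j \<noteq> y \<Longrightarrow> emp_measure m (X(i:=y)) j = emp_measure m X j"
    and "emp_measure m (X(i:=y)) (X i) = emp_measure m X (X i) - 1 / real m"
    and "emp_measure m (X(i:=y)) y = emp_measure m X y + 1 / real m"
proof -
  show "j \<noteq> X i \<Longrightarrow> j \<noteq> y \<Longrightarrow> emp_measure m (X(i:=y)) j = emp_measure m X j"
  proof -
    assume "j \<noteq> X i" "j \<noteq> y"
    hence "{t\<in>{..<m}. (X(i:=y)) t = j} = {t\<in>{..<m}. X t = j}" by auto
    thus ?thesis unfolding emp_measure_def by simp
  qed
  have "{t\<in>{..<m}. (X(i:=y)) t = X i} = {t\<in>{..<m}. X t = X i} - {i}" using assms by auto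
  moreover have "i \<in> {t\<in>{..<m}. X t = X i}" using assms by auto
  ultimately have "card {t\<in>{..<m}. (X(i:=y)) t = X i} = card {t\<in>{..<m}. X t = X i} - 1" by simp
  moreover have "card {t\<in>{..<m}. X t = X i} \<ge> 1"
  proof -
    have "card {t\<in>{..<m}. X t = X i} > 0" using \<open>i \<in> _\<close> by (subst card_gt_0_iff) auto
    thus ?thesis by simp
  qed
  ultimately show "emp_measure m (X(i:=y)) (X i) = emp_measure m X (X i) - 1 / real m"
    unfolding emp_measure_def by (simp add: of_nat_diff diff_divide_distrib)
  have "{t\<in>{..<m}. (X(i:=y)) t = y} = insert i {t\<in>{..<m}. X t = y}" using assms by auto
  moreover have "i \<notin> {t\<in>{..<m}. X t = y}" using assms by auto
  ultimately have "card {t\<in>{..<m}. (X(i:=y)) t = y} = Suc (card {t\<in>{..<m}. X t = y})" by simp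
  thus "emp_measure m (X(i:=y)) y = emp_measure m X y + 1 / real m"
    unfolding emp_measure_def by (simp add: add_divide_distrib)
qed

lemma suminf_diff2:
  fixes a b :: "nat \<Rightarrow> real"
  assumes "summable a" "summable b" "\<And>j. j \<noteq> u \<Longrightarrow> j \<noteq> v \<Longrightarrow> a j = b j" "u \<noteq> v"
  shows "suminf a - suminf b = (a u - b u) + (a v - b v)"
proof -
  have "suminf a - suminf b = suminf (\<lambda>j. a j - b j)" using suminf_diff[OF assms(1,2)] by simp
  also have "\<dots> = (\<Sum>j\<in>{u,v}. a j - b j)" by (rule suminf_finite) (use assms in auto)
  finally show ?thesis using assms(4) by simp
qed

lemma emp_summable_id: "summable (emp_measure m X)"
  using emp_summable[of "\<lambda>x. x" m X] by simp

lemma tv_summable: "summable (\<lambda>j. \<bar>emp_measure m X j - pmf (\<mu>::nat pmf) j\<bar>)"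
proof (rule summable_rabs_comparison_test[where g="\<lambda>j. emp_measure m X j + pmf \<mu> j"])
  show "\<exists>N. \<forall>n\<ge>N. \<bar>emp_measure m X n - pmf \<mu> n\<bar> \<le> emp_measure m X n + pmf \<mu> n"
    using emp_nonneg[of m X] pmf_nonneg[of \<mu>] by (intro exI[of _ 0]) (auto simp: abs_le_iff)
  show "summable (\<lambda>j. emp_measure m X j + pmf \<mu> j)"
    by (intro summable_add emp_summable_id pmf_nat_summable)
qed

lemma sqrt_summable: "summable (\<lambda>j. sqrt (emp_measure m X j))"
  using emp_summable[of sqrt m X] by simp

lemma emp_suminf: "m > 0 \<Longrightarrow> suminf (emp_measure m X) = 1"
  using suminf_finite[of "X ` {..<m}" "emp_measure m X"] emp_zero[of _ X m] emp_sum[of m X] by auto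

lemma tv_diff:
  assumes "i < m"
  shows "\<bar>tv_dist (emp_measure m (X(i:=y))) (pmf \<mu>) - tv_dist (emp_measure m X) (pmf \<mu>)\<bar> \<le> 1 / real m"
proof (cases "X i = y")
  case True
  hence "X(i:=y) = X" by auto
  thus ?thesis by simp
next
  case False
  define e where "e = emp_measure m X"
  define e' where "e' = emp_measure m (X(i:=y))"
  define r where "r = 1 / real m"
  have u: "e' (X i) = e (X i) - r" and v: "e' y = e y + r"
    using emp_upd(2,3)[of i m X y, OF assms False] by (simp_all add: e_def e'_def r_def)
  have "suminf (\<lambda>j. \<bar>e' j - pmf \<mu> j\<bar>) - suminf (\<lambda>j. \<bar>e j - pmf \<mu> j\<bar>)
     = (\<bar>e' (X i) - pmf \<mu> (X i)\<bar> - \<bar>e (X i) - pmf \<mu> (X i)\<bar>) + (\<bar>e' y - pmf \<mu> y\<bar> - \<bar>e y - pmf \<mu> y\<bar>)"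
    by (rule suminf_diff2) (use emp_upd(1)[of i m X y, OF assms False] False in \<open>auto simp: e_def e'_def tv_summable\<close>)
  also have "\<bar>\<dots>\<bar> \<le> 2 * r"
  proof -
    have "r \<ge> 0" by (simp add: r_def)
    thus ?thesis unfolding u v abs_le_iff by linarith
  qed
  finally have "\<bar>suminf (\<lambda>j. \<bar>e' j - pmf \<mu> j\<bar>) - suminf (\<lambda>j. \<bar>e j - pmf \<mu> j\<bar>)\<bar> \<le> 2 * r" .
  thus ?thesis unfolding tv_dist_def e_def e'_def r_def by (simp add: right_diff_distrib[symmetric] abs_mult)
qed

lemma phi_diff:
  assumes "i < m"
  shows "\<bar>Phi m (emp_measure m (X(i:=y))) - Phi m (emp_measure m X)\<bar> \<le> 1 / real m"
proof (cases "X i = y")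
  case True
  hence "X(i:=y) = X" by auto
  thus ?thesis by simp
next
  case False
  define e where "e = emp_measure m X"
  define e' where "e' = emp_measure m (X(i:=y))"
  define r where "r = 1 / real m"
  have r: "r > 0" using assms by (simp add: r_def)
  have u: "e' (X i) = e (X i) - r" and v: "e' y = e y + r"
    using emp_upd(2,3)[of i m X y, OF assms False] by (simp_all add: e_def e'_def r_def)
  have e0: "e j \<ge> 0" "e' j \<ge> 0" for j by (simp_all add: e_def e'_def emp_nonneg)
  have d: "suminf (\<lambda>j. sqrt (e' j)) - suminf (\<lambda>j. sqrt (e j))
     = (sqrt (e' (X i)) - sqrt (e (X i))) + (sqrt (e' y) - sqrt (e y))"
    by (rule suminf_diff2) (use emp_upd(1)[of i m X y, OF assms False] False in \<open>auto simp: e_def e'_def sqrt_summable\<close>)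
  have a1: "sqrt (e (X i)) - sqrt (e' (X i)) \<ge> 0" using u r by simp
  have a2: "sqrt (e (X i)) - sqrt (e' (X i)) \<le> sqrt r"
  proof -
    have "sqrt (e' (X i) + r) \<le> sqrt (e' (X i)) + sqrt r" by (rule sqrt_add_le_add_sqrt) (use e0 r in auto)
    thus ?thesis using u by simp
  qed
  have b1: "sqrt (e' y) - sqrt (e y) \<ge> 0" using v r by simp
  have b2: "sqrt (e' y) - sqrt (e y) \<le> sqrt r"
  proof -
    have "sqrt (e y + r) \<le> sqrt (e y) + sqrt r" by (rule sqrt_add_le_add_sqrt) (use e0 r in auto)
    thus ?thesis using v by simp
  qed
  have "\<bar>suminf (\<lambda>j. sqrt (e' j)) - suminf (\<lambda>j. sqrt (e j))\<bar> \<le> sqrt r"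
    unfolding d abs_le_iff using a1 a2 b1 b2 by linarith
  hence "1 / sqrt (real m) * \<bar>suminf (\<lambda>j. sqrt (e' j)) - suminf (\<lambda>j. sqrt (e j))\<bar> \<le> 1 / sqrt (real m) * sqrt r"
    by (intro mult_left_mono) auto
  also have "1 / sqrt (real m) * sqrt r = r" using assms
    by (simp add: r_def real_sqrt_divide)
  finally show ?thesis unfolding Phi_def e_def e'_def r_def
    by (simp add: diff_divide_distrib[symmetric])
qed

lemma tv_bound:
  assumes "m > 0"
  shows "\<bar>tv_dist (emp_measure m X) (pmf (\<mu>::nat pmf))\<bar> \<le> 1"
proof -
  have "suminf (\<lambda>j. \<bar>emp_measure m X j - pmf \<mu> j\<bar>) \<le> suminf (\<lambda>j. emp_measure m X j + pmf \<mu> j)"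
    using emp_nonneg[of m X] pmf_nonneg[of \<mu>]
    by (intro suminf_le tv_summable summable_add emp_summable_id pmf_nat_summable) (auto simp: abs_le_iff)
  also have "\<dots> = suminf (emp_measure m X) + suminf (pmf \<mu>)"
    by (intro suminf_add[symmetric] emp_summable_id pmf_nat_summable)
  also have "\<dots> \<le> 2" using emp_suminf[OF assms, of X] pmf_nat_suminf_le[of \<mu>] by simp
  finally have "suminf (\<lambda>j. \<bar>emp_measure m X j - pmf \<mu> j\<bar>) \<le> 2" .
  moreover have "suminf (\<lambda>j. \<bar>emp_measure m X j - pmf \<mu> j\<bar>) \<ge> 0"
    by (intro suminf_nonneg tv_summable) auto
  ultimately show ?thesis unfolding tv_dist_def by simp
qed

lemma phi_bound:
  assumes "m > 0"
  shows "\<bar>Phi m (emp_measure m X)\<bar> \<le> real m"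
proof -
  have "suminf (\<lambda>j. sqrt (emp_measure m X j)) = (\<Sum>j\<in>X ` {..<m}. sqrt (emp_measure m X j))"
    by (rule suminf_finite) (auto simp: emp_zero)
  also have "\<dots> \<le> (\<Sum>j\<in>X ` {..<m}. 1)"
    by (intro sum_mono) (auto simp: emp_le1)
  also have "\<dots> \<le> real m" using card_image_le[of "{..<m}" X] by simp
  finally have s: "suminf (\<lambda>j. sqrt (emp_measure m X j)) \<le> real m" .
  have s0: "suminf (\<lambda>j. sqrt (emp_measure m X j)) \<ge> 0"
    by (intro suminf_nonneg sqrt_summable) (auto simp: emp_nonneg)
  have "1 / sqrt (real m) \<le> 1" using assms by simp
  hence "1 / sqrt (real m) * suminf (\<lambda>j. sqrt (emp_measure m X j)) \<le> 1 * real m"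
    using s s0 by (intro mult_mono) auto
  thus ?thesis unfolding Phi_def using s0 by simp
qed



lemma bind_bern_exp:
  fixes f :: "'a \<Rightarrow> real"
  assumes p: "0 \<le> p" "p \<le> 1" and fin: "finite (set_pmf (F True))" "finite (set_pmf (F False))"
  shows "measure_pmf.expectation (bind_pmf (bernoulli_pmf p) F) f =
         p * measure_pmf.expectation (F True) f + (1 - p) * measure_pmf.expectation (F False) f"
proof -
  define A where "A = set_pmf (F True) \<union> set_pmf (F False)"
  have A: "finite A" using fin by (simp add: A_def)
  have sub: "set_pmf (bind_pmf (bernoulli_pmf p) F) \<subseteq> A"
    by (auto simp: A_def set_bind_pmf) (metis (full_types))
  have "measure_pmf.expectation (bind_pmf (bernoulli_pmf p) F) f =
        (\<Sum>a\<in>A. f a * pmf (bind_pmf (bernoulli_pmf p) F) a)"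
    by (rule integral_measure_pmf_real[OF A]) (use sub in auto)
  also have "\<dots> = (\<Sum>a\<in>A. p * (f a * pmf (F True) a) + (1 - p) * (f a * pmf (F False) a))"
    by (intro sum.cong refl) (simp add: pmf_bind p algebra_simps)
  also have "\<dots> = p * (\<Sum>a\<in>A. f a * pmf (F True) a) + (1 - p) * (\<Sum>a\<in>A. f a * pmf (F False) a)"
    by (simp add: sum.distrib sum_distrib_left)
  also have "(\<Sum>a\<in>A. f a * pmf (F True) a) = measure_pmf.expectation (F True) f"
    by (rule integral_measure_pmf_real[OF A, symmetric]) (auto simp: A_def)
  also have "(\<Sum>a\<in>A. f a * pmf (F False) a) = measure_pmf.expectation (F False) f"
    by (rule integral_measure_pmf_real[OF A, symmetric]) (auto simp: A_def)
  finally show ?thesis .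
qed

lemma binom_rec:
  fixes f :: "nat \<Rightarrow> real"
  assumes p: "0 \<le> p" "p \<le> 1"
  shows "measure_pmf.expectation (binomial_pmf (Suc n) p) f =
         (1 - p) * measure_pmf.expectation (binomial_pmf n p) f +
         p * measure_pmf.expectation (binomial_pmf n p) (\<lambda>k. f (Suc k))"
proof -
  have "binomial_pmf (Suc n) p =
        bind_pmf (bernoulli_pmf p) (\<lambda>b. map_pmf (\<lambda>k. (if b then 1 else 0) + k) (binomial_pmf n p))"
    using p by (simp add: binomial_pmf_Suc map_pmf_def)
  also have "measure_pmf.expectation \<dots> f =
     p * measure_pmf.expectation (map_pmf (\<lambda>k. 1 + k) (binomial_pmf n p)) f
     + (1 - p) * measure_pmf.expectation (map_pmf (\<lambda>k. 0 + k) (binomial_pmf n p)) f"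
    by (subst bind_bern_exp) (use p in \<open>auto simp: finite_set_pmf_binomial_pmf\<close>)
  finally show ?thesis by simp
qed

lemma binom_moments:
  assumes p: "0 \<le> p" "p \<le> 1"
  shows "measure_pmf.expectation (binomial_pmf n p) (\<lambda>k. real k) = real n * p"
    and "measure_pmf.expectation (binomial_pmf n p) (\<lambda>k. (real k)^2) = real n * p * (1 - p) + (real n * p)^2"
proof (induction n)
  case 0
  { case 1 show ?case using p by (simp add: binomial_pmf_0) }
  { case 2 show ?case using p by (simp add: binomial_pmf_0) }
next
  case (Suc n)
  have ip: "integrable (measure_pmf (binomial_pmf n p)) g" for g :: "nat \<Rightarrow> real"
    using p by auto
  have E1: "measure_pmf.expectation (binomial_pmf n p) (\<lambda>k. real k) = real n * p"
    by (rule Suc.IH(1))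
  have E2: "measure_pmf.expectation (binomial_pmf n p) (\<lambda>k. (real k)^2) = real n * p * (1 - p) + (real n * p)^2"
    by (rule Suc.IH(2))
  have S1: "measure_pmf.expectation (binomial_pmf n p) (\<lambda>k. real (Suc k)) = real n * p + 1"
    using E1 by (simp add: Bochner_Integration.integral_add ip)
  have S2: "measure_pmf.expectation (binomial_pmf n p) (\<lambda>k. (real (Suc k))^2) =
       real n * p * (1 - p) + (real n * p)^2 + 2 * (real n * p) + 1"
  proof -
    have "(\<lambda>k. (real (Suc k))^2) = (\<lambda>k. (real k)^2 + (2 * real k + 1))"
      by (auto simp: power2_eq_square algebra_simps)
    thus ?thesis using E1 E2 by (simp add: Bochner_Integration.integral_add ip)
  qed
  { case 1 show ?case unfolding binom_rec[OF p, of n "\<lambda>k. real k"] E1 S1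
      by (simp add: algebra_simps) }
  { case 2 show ?case unfolding binom_rec[OF p, of n "\<lambda>k. (real k)^2"] E2 S2
      by (simp add: algebra_simps power2_eq_square) }
qed

lemma binom_poly:
  assumes p: "0 \<le> p" "p \<le> 1"
  shows "measure_pmf.expectation (binomial_pmf n p) (\<lambda>k. a * (real k)^2 + b * real k + c) =
         a * (real n * p * (1 - p) + (real n * p)^2) + b * (real n * p) + c"
proof -
  have ip: "integrable (measure_pmf (binomial_pmf n p)) g" for g :: "nat \<Rightarrow> real"
    using p by auto
  have "measure_pmf.expectation (binomial_pmf n p) (\<lambda>k. a * (real k)^2 + b * real k + c) =
        a * measure_pmf.expectation (binomial_pmf n p) (\<lambda>k. (real k)^2) +
        b * measure_pmf.expectation (binomial_pmf n p) (\<lambda>k. real k) + c"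
    by (simp add: Bochner_Integration.integral_add ip)
  thus ?thesis using binom_moments[OF p, of n] by simp
qed

lemma sqrt_lower:
  assumes "x \<ge> 0" "L > 0"
  shows "x * (3 * L - x) / (2 * L * sqrt L) \<le> sqrt x"
proof -
  define s where "s = sqrt x"
  define q where "q = sqrt L"
  have s: "s \<ge> 0" "x = s^2" using assms by (simp_all add: s_def)
  have q: "q > 0" "L = q^2" using assms by (simp_all add: q_def)
  have "s^2 * (3 * q^2 - s^2) \<le> s * (2 * q^2 * q)"
  proof -
    have "s * (2 * q^2 * q) - s^2 * (3 * q^2 - s^2) = s * ((s - q)^2 * (s + 2*q))"
      by (simp add: power2_eq_square algebra_simps)
    also have "\<dots> \<ge> 0" using s q by (intro mult_nonneg_nonneg) auto
    finally show ?thesis by simp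
  qed
  hence "s^2 * (3 * q^2 - s^2) / (2 * q^2 * q) \<le> s" using q
    by (simp add: divide_le_eq mult.commute)
  moreover have "x * (3 * L - x) / (2 * L * sqrt L) = s^2 * (3 * q^2 - s^2) / (2 * q^2 * q)"
    unfolding s_def[symmetric] q_def[symmetric] by (simp only: s(2) q(2))
  ultimately show ?thesis by (simp only: s_def)
qed

lemma binom_abs_le:
  assumes n: "n \<ge> 1" and p: "0 \<le> p" "p \<le> 1"
  shows "measure_pmf.expectation (binomial_pmf n p) (\<lambda>k. \<bar>real k - real n * p\<bar>)
         \<le> 2 * measure_pmf.expectation (binomial_pmf n p) (\<lambda>k. sqrt (real k))"
proof -
  have ip: "integrable (measure_pmf (binomial_pmf n p)) g" for g :: "nat \<Rightarrow> real"
    using p by auto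
  define L where "L = real n * p"
  show ?thesis
  proof (cases "L \<ge> 1")
    case True
    define q where "q = sqrt L"
    have q: "q > 0" "q^2 = L" using True by (simp_all add: q_def)
    have "measure_pmf.expectation (binomial_pmf n p) (\<lambda>k. \<bar>real k - L\<bar>) \<le>
          measure_pmf.expectation (binomial_pmf n p) (\<lambda>k. (1/(2*q)) * (real k)^2 + (- L/q) * real k + (L^2/(2*q) + q/2))"
    proof (intro integral_mono ip)
      fix k :: nat
      have "0 \<le> (\<bar>real k - L\<bar> - q)^2" by simp
      hence "2 * q * \<bar>real k - L\<bar> \<le> (real k - L)^2 + q^2"
        by (simp add: power2_eq_square algebra_simps)
      hence "\<bar>real k - L\<bar> \<le> ((real k - L)^2 + q^2) / (2 * q)" using q
        by (simp add: le_divide_eq mult.commute)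
      also have "\<dots> = (1/(2*q)) * (real k)^2 + (- L/q) * real k + (L^2/(2*q) + q/2)"
        using q by (simp add: field_simps power2_eq_square)
      finally show "\<bar>real k - L\<bar> \<le> \<dots>" .
    qed
    also have "\<dots> = (1/(2*q)) * (L * (1 - p) + L^2) + (- L/q) * L + (L^2/(2*q) + q/2)"
      unfolding binom_poly[OF p] L_def ..
    also have "\<dots> = L * (1 - p) / (2*q) + q/2"
      using q by (simp add: field_simps power2_eq_square)
    also have "\<dots> \<le> L / (2*q) + q/2"
      using q p True by (intro add_right_mono divide_right_mono) auto
    also have "\<dots> = q" using q by (simp add: field_simps power2_eq_square)
    also have "q \<le> (2*L - 1) / q"
      using q True by (simp add: le_divide_eq power2_eq_square)
    also have "\<dots> \<le> (2*L - (1 - p)) / q"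
      using q p by (intro divide_right_mono) auto
    also have "\<dots> = 2 * ((3*L/(2*L*q)) * L + (- 1/(2*L*q)) * (L * (1 - p) + L^2))"
      using q True by (simp add: field_simps power2_eq_square)
    also have "\<dots> = 2 * measure_pmf.expectation (binomial_pmf n p) (\<lambda>k. (- 1/(2*L*q)) * (real k)^2 + (3*L/(2*L*q)) * real k + 0)"
      unfolding binom_poly[OF p] L_def[symmetric] by (simp add: algebra_simps)
    also have "\<dots> \<le> 2 * measure_pmf.expectation (binomial_pmf n p) (\<lambda>k. sqrt (real k))"
    proof (intro mult_left_mono integral_mono ip)
      fix k :: nat
      have "real k * (3 * L - real k) / (2 * L * sqrt L) \<le> sqrt (real k)"
        by (rule sqrt_lower) (use True in auto)
      thus "(- 1/(2*L*q)) * (real k)^2 + (3*L/(2*L*q)) * real k + 0 \<le> sqrt (real k)"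
        using q True by (simp add: q_def[symmetric] field_simps power2_eq_square)
    qed simp
    finally show ?thesis unfolding L_def .
  next
    case False
    define z where "z = (1 - p) ^ n"
    have Ez: "measure_pmf.expectation (binomial_pmf n p) (\<lambda>k. if k = 0 then 1 else 0) = z"
    proof -
      have "measure_pmf.expectation (binomial_pmf n p) (\<lambda>k. if k = 0 then 1 else 0) =
            (\<Sum>a\<in>{0}. (if a = 0 then 1 else 0) * pmf (binomial_pmf n p) a)"
        by (rule integral_measure_pmf_real) (auto split: if_splits)
      thus ?thesis using p by (simp add: z_def)
    qed
    have "measure_pmf.expectation (binomial_pmf n p) (\<lambda>k. \<bar>real k - L\<bar>) =
          measure_pmf.expectation (binomial_pmf n p) (\<lambda>k. real k - L + 2 * L * (if k = 0 then 1 else 0))"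
    proof (intro Bochner_Integration.integral_cong refl)
      fix k :: nat
      show "\<bar>real k - L\<bar> = real k - L + 2 * L * (if k = 0 then 1 else 0)"
        using False p by (cases "k = 0") (auto simp: L_def)
    qed
    also have "\<dots> = measure_pmf.expectation (binomial_pmf n p) (\<lambda>k. real k) - L
                    + 2 * L * measure_pmf.expectation (binomial_pmf n p) (\<lambda>k. if k = 0 then 1 else 0)"
      by (simp add: Bochner_Integration.integral_add Bochner_Integration.integral_diff ip)
    also have "\<dots> = 2 * L * z" using binom_moments(1)[OF p, of n] Ez by (simp add: L_def)
    also have "\<dots> \<le> 2 * (1 - z)"
    proof -
      have "1 + L \<le> (1 + p)^n" unfolding L_def using Bernoulli_inequality[of p n] p by simp
      hence "z * (1 + L) \<le> z * (1 + p)^n" using p by (intro mult_left_mono) (auto simp: z_def)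
      also have "\<dots> = (1 - p^2)^n" by (simp add: z_def power_mult_distrib[symmetric] power2_eq_square algebra_simps)
      also have "\<dots> \<le> 1" using p by (intro power_le_one) (auto simp: power_le_one)
      finally show ?thesis by (simp add: algebra_simps)
    qed
    also have "\<dots> = 2 * measure_pmf.expectation (binomial_pmf n p) (\<lambda>k. 1 - (if k = 0 then 1 else 0))"
      using Ez by (simp add: Bochner_Integration.integral_diff ip)
    also have "\<dots> \<le> 2 * measure_pmf.expectation (binomial_pmf n p) (\<lambda>k. sqrt (real k))"
      by (intro mult_left_mono integral_mono ip) auto
    finally show ?thesis unfolding L_def .
  qed
qed



lemma count_binomial:
  "map_pmf (\<lambda>X. card {t\<in>{..<m}. X t = j}) (Pi_pmf {..<m} (0::nat) (\<lambda>_. \<mu>)) = binomial_pmf m (pmf \<mu> j)"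
proof -
  have bern: "map_pmf (\<lambda>x. x = j) \<mu> = bernoulli_pmf (pmf \<mu> j)"
  proof (rule pmf_eqI)
    fix b :: bool
    show "pmf (map_pmf (\<lambda>x. x = j) \<mu>) b = pmf (bernoulli_pmf (pmf \<mu> j)) b"
    proof (cases b)
      case True
      have "(\<lambda>x. x = j) -` {True} = {j}" by auto
      thus ?thesis using True by (simp add: pmf_map measure_pmf_single pmf_le_1)
    next
      case False
      have "(\<lambda>x. x = j) -` {False} = UNIV - {j}" by auto
      moreover have "measure_pmf.prob \<mu> (UNIV - {j}) = 1 - pmf \<mu> j"
        using measure_pmf.prob_compl[of "{j}" \<mu>] by (simp add: measure_pmf_single)
      ultimately show ?thesis using False
        by (simp add: pmf_map pmf_le_1)
    qed
  qed
  have "binomial_pmf m (pmf \<mu> j) =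
        map_pmf (\<lambda>f. card {x\<in>{..<m}. f x}) (Pi_pmf {..<m} (0 = j) (\<lambda>_. bernoulli_pmf (pmf \<mu> j)))"
    by (rule binomial_pmf_altdef') (auto simp: pmf_le_1)
  also have "Pi_pmf {..<m} (0 = j) (\<lambda>_. bernoulli_pmf (pmf \<mu> j)) =
             Pi_pmf {..<m} (0 = j) (\<lambda>_. map_pmf (\<lambda>x. x = j) \<mu>)"
    by (simp add: bern)
  also have "\<dots> = map_pmf (\<lambda>h. (\<lambda>x. x = j) \<circ> h) (Pi_pmf {..<m} 0 (\<lambda>_. \<mu>))"
    by (rule Pi_pmf_map) auto
  finally show ?thesis by (simp add: map_pmf_comp o_def)
qed

lemma per_j:
  assumes m: "m \<ge> 1"
  shows "measure_pmf.expectation (Pi_pmf {..<m} 0 (\<lambda>_. \<mu>)) (\<lambda>X. (1/2) * \<bar>emp_measure m X j - pmf \<mu> j\<bar>)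
      \<le> measure_pmf.expectation (Pi_pmf {..<m} 0 (\<lambda>_. \<mu>)) (\<lambda>X. (1 / sqrt (real m)) * sqrt (emp_measure m X j))"
proof -
  define P where "P = Pi_pmf {..<m} (0::nat) (\<lambda>_. \<mu>)"
  define cnt where "cnt X = card {t\<in>{..<m}. X t = j}" for X :: "nat \<Rightarrow> nat"
  define p where "p = pmf \<mu> j"
  have p: "0 \<le> p" "p \<le> 1" by (auto simp: p_def pmf_le_1)
  have mp: "real m > 0" using m by simp
  have dist: "map_pmf cnt P = binomial_pmf m p" unfolding cnt_def P_def p_def by (rule count_binomial)
  have E: "measure_pmf.expectation P (\<lambda>X. g (cnt X)) = measure_pmf.expectation (binomial_pmf m p) g" for g :: "nat \<Rightarrow> real"
    unfolding dist[symmetric] by simp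
  have emp: "emp_measure m X j = real (cnt X) / real m" for X unfolding emp_measure_def cnt_def ..
  have "measure_pmf.expectation P (\<lambda>X. (1/2) * \<bar>emp_measure m X j - pmf \<mu> j\<bar>)
      = measure_pmf.expectation (binomial_pmf m p) (\<lambda>k. \<bar>real k - real m * p\<bar> * (1 / (2 * real m)))"
    unfolding emp p_def[symmetric] E[symmetric]
  proof (intro Bochner_Integration.integral_cong refl)
    fix X
    have "real (cnt X) / real m - p = (real (cnt X) - real m * p) / real m" using mp by (simp add: field_simps)
    thus "1 / 2 * \<bar>real (cnt X) / real m - p\<bar> = \<bar>real (cnt X) - real m * p\<bar> * (1 / (2 * real m))"
      using mp by (simp add: abs_divide)
  qed
  also have "\<dots> = measure_pmf.expectation (binomial_pmf m p) (\<lambda>k. \<bar>real k - real m * p\<bar>) * (1 / (2 * real m))"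
    by (rule integral_mult_left_zero)
  also have "\<dots> \<le> (2 * measure_pmf.expectation (binomial_pmf m p) (\<lambda>k. sqrt (real k))) * (1 / (2 * real m))"
    by (intro mult_right_mono binom_abs_le m p) (use mp in auto)
  also have "\<dots> = measure_pmf.expectation (binomial_pmf m p) (\<lambda>k. sqrt (real k)) * (1 / real m)"
    by simp
  also have "\<dots> = measure_pmf.expectation (binomial_pmf m p) (\<lambda>k. sqrt (real k) * (1 / real m))"
    by (rule integral_mult_left_zero[symmetric])
  also have "\<dots> = measure_pmf.expectation P (\<lambda>X. (1 / sqrt (real m)) * sqrt (emp_measure m X j))"
    unfolding emp E[symmetric]
  proof (intro Bochner_Integration.integral_cong refl)
    fix X
    have "sqrt (real m) * sqrt (real m) = real m" using mp by simp
    thus "sqrt (real (cnt X)) * (1 / real m) = 1 / sqrt (real m) * sqrt (real (cnt X) / real m)"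
      using mp by (simp add: real_sqrt_divide field_simps)
  qed
  finally show ?thesis unfolding P_def .
qed



lemma nn_sum_swap:
  fixes a :: "nat \<Rightarrow> (nat \<Rightarrow> nat) \<Rightarrow> real" and P :: "(nat \<Rightarrow> nat) pmf"
  assumes nn: "\<And>j X. a j X \<ge> 0" and sm: "\<And>X. summable (\<lambda>j. a j X)"
    and bd: "\<And>j X. a j X \<le> 1" and bd2: "\<And>X. suminf (\<lambda>j. a j X) \<le> C"
  shows "ennreal (measure_pmf.expectation P (\<lambda>X. suminf (\<lambda>j. a j X))) =
         (\<Sum>j. ennreal (measure_pmf.expectation P (a j)))"
proof -
  have s0: "suminf (\<lambda>j. a j X) \<ge> 0" for X by (intro suminf_nonneg sm nn)
  have "ennreal (measure_pmf.expectation P (\<lambda>X. suminf (\<lambda>j. a j X))) =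
        (\<integral>\<^sup>+X. ennreal (suminf (\<lambda>j. a j X)) \<partial>P)"
    by (rule nn_integral_eq_integral[symmetric])
       (auto intro!: pmf_integrable_bounded[where B=C] simp: s0 bd2 abs_of_nonneg)
  also have "\<dots> = (\<integral>\<^sup>+X. (\<Sum>j. ennreal (a j X)) \<partial>P)"
    by (intro nn_integral_cong suminf_ennreal2[symmetric] nn sm)
  also have "\<dots> = (\<Sum>j. (\<integral>\<^sup>+X. ennreal (a j X) \<partial>P))"
    by (rule nn_integral_suminf) simp
  also have "\<dots> = (\<Sum>j. ennreal (measure_pmf.expectation P (a j)))"
    by (intro suminf_cong nn_integral_eq_integral)
       (auto intro!: pmf_integrable_bounded[where B=1] simp: nn bd abs_of_nonneg)
  finally show ?thesis .
qed

lemma exp_tv_le: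
  assumes m: "m \<ge> 1"
  shows "measure_pmf.expectation (Pi_pmf {..<m} 0 (\<lambda>_. \<mu>)) (\<lambda>X. tv_dist (emp_measure m X) (pmf \<mu>))
      \<le> measure_pmf.expectation (Pi_pmf {..<m} 0 (\<lambda>_. \<mu>)) (\<lambda>X. Phi m (emp_measure m X))"
proof -
  define P where "P = Pi_pmf {..<m} (0::nat) (\<lambda>_. \<mu>)"
  define a where "a j X = (1/2) * \<bar>emp_measure m X j - pmf \<mu> j\<bar>" for j X
  define b where "b j X = (1 / sqrt (real m)) * sqrt (emp_measure m X j)" for j X
  have mp: "m > 0" using m by simp
  have tv: "tv_dist (emp_measure m X) (pmf \<mu>) = suminf (\<lambda>j. a j X)" for X
    unfolding tv_dist_def a_def by (rule suminf_mult[symmetric]) (rule tv_summable)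
  have ph: "Phi m (emp_measure m X) = suminf (\<lambda>j. b j X)" for X
    unfolding Phi_def b_def by (rule suminf_mult[symmetric]) (rule sqrt_summable)
  have e01: "0 \<le> emp_measure m X j" "emp_measure m X j \<le> 1" for X j
    by (simp_all add: emp_nonneg emp_le1)
  have p01: "0 \<le> pmf \<mu> j" "pmf \<mu> j \<le> 1" for j by (simp_all add: pmf_le_1)
  have "ennreal (measure_pmf.expectation P (\<lambda>X. suminf (\<lambda>j. a j X))) =
        (\<Sum>j. ennreal (measure_pmf.expectation P (a j)))"
  proof (rule nn_sum_swap[where C=1])
    show "0 \<le> a j X" for j X by (simp add: a_def)
    show "summable (\<lambda>j. a j X)" for X unfolding a_def by (intro summable_mult tv_summable)
    show "a j X \<le> 1" for j X
    proof -
      have "\<bar>emp_measure m X j - pmf \<mu> j\<bar> \<le> 2" using e01[of X j] p01[of j] by (intro abs_leI) linarith+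
      thus ?thesis unfolding a_def by simp
    qed
    show "suminf (\<lambda>j. a j X) \<le> 1" for X using tv_bound[OF mp, of X \<mu>] tv by simp
  qed
  also have "\<dots> \<le> (\<Sum>j. ennreal (measure_pmf.expectation P (b j)))"
    by (intro suminf_le summableI ennreal_leI per_j[OF m, of \<mu>, folded P_def a_def b_def])
  also have "\<dots> = ennreal (measure_pmf.expectation P (\<lambda>X. suminf (\<lambda>j. b j X)))"
  proof (rule nn_sum_swap[where C="real m", symmetric])
    show "0 \<le> b j X" for j X by (simp add: b_def emp_nonneg)
    show "summable (\<lambda>j. b j X)" for X unfolding b_def by (intro summable_mult sqrt_summable)
    show "b j X \<le> 1" for j X 
    proof -
      have "1 / sqrt (real m) \<le> 1" using m by simp
      moreover have "sqrt (emp_measure m X j) \<le> 1" using e01[of X j] by simp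
      ultimately show ?thesis unfolding b_def by (intro mult_le_one) (auto simp: emp_nonneg)
    qed
    show "suminf (\<lambda>j. b j X) \<le> real m" for X using phi_bound[OF mp, of X] ph by simp
  qed
  finally have "ennreal (measure_pmf.expectation P (\<lambda>X. suminf (\<lambda>j. a j X)))
       \<le> ennreal (measure_pmf.expectation P (\<lambda>X. suminf (\<lambda>j. b j X)))" .
  moreover have "measure_pmf.expectation P (\<lambda>X. suminf (\<lambda>j. b j X)) \<ge> 0"
  proof (intro integral_nonneg_AE AE_I2)
    fix X show "0 \<le> suminf (\<lambda>j. b j X)"
      unfolding b_def by (intro suminf_nonneg summable_mult sqrt_summable) (auto simp: emp_nonneg)
  qed
  ultimately have "measure_pmf.expectation P (\<lambda>X. suminf (\<lambda>j. a j X))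
       \<le> measure_pmf.expectation P (\<lambda>X. suminf (\<lambda>j. b j X))"
    by (subst (asm) ennreal_le_iff) auto
  thus ?thesis unfolding P_def tv ph .
qed



theorem theorem1:
  fixes m :: nat and \<delta> :: real and \<mu> :: "nat pmf"
  assumes "m \<ge> 1" and "0 < \<delta>" and "\<delta> < 1"
    and "set_pmf \<mu> \<subseteq> {1..}"
  shows "(measure_pmf.prob (Pi_pmf {..<m} 0 (\<lambda>_. \<mu>))
           {X. tv_dist (emp_measure m X) (pmf \<mu>)
               \<le> Phi m (emp_measure m X) + 3 * sqrt (ln (2 / \<delta>) / (2 * real m))}
         \<ge> 1 - \<delta>) \<and>
         (measure_pmf.expectation (Pi_pmf {..<m} 0 (\<lambda>_. \<mu>))
           (\<lambda>X. tv_dist (emp_measure m X) (pmf \<mu>))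
         \<le> measure_pmf.expectation (Pi_pmf {..<m} 0 (\<lambda>_. \<mu>))
           (\<lambda>X. Phi m (emp_measure m X)))"
proof
  note m = assms(1)
  have mp: "m > 0" using m by simp
  define P where "P = Pi_pmf {..<m} (0::nat) (\<lambda>_. \<mu>)"
  define f1 where "f1 X = tv_dist (emp_measure m X) (pmf \<mu>)" for X
  define f2 where "f2 X = Phi m (emp_measure m X)" for X
  have EE: "measure_pmf.expectation P f1 \<le> measure_pmf.expectation P f2"
    unfolding P_def f1_def f2_def by (rule exp_tv_le[OF m])
  thus "measure_pmf.expectation (Pi_pmf {..<m} 0 (\<lambda>_. \<mu>)) (\<lambda>X. tv_dist (emp_measure m X) (pmf \<mu>))
         \<le> measure_pmf.expectation (Pi_pmf {..<m} 0 (\<lambda>_. \<mu>)) (\<lambda>X. Phi m (emp_measure m X))"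
    unfolding P_def f1_def f2_def .
  define s where "s = sqrt (ln (2 / \<delta>) / (2 * real m))"
  have ln_pos: "ln (2 / \<delta>) > 0" using assms(2,3) by simp
  have s: "s > 0" using ln_pos mp by (simp add: s_def)
  have expo: "exp (-2 * s\<^sup>2 / (real (card {..<m}) * (1 / real m)\<^sup>2)) = \<delta> / 2"
  proof -
    have "-2 * s\<^sup>2 / (real (card {..<m}) * (1 / real m)\<^sup>2) = - ln (2 / \<delta>)"
      using mp ln_pos by (simp add: s_def field_simps power2_eq_square)
    thus ?thesis using assms(2) by (simp add: exp_minus)
  qed
  define A1 where "A1 = {X. f1 X - measure_pmf.expectation P f1 \<ge> s}"
  define A2 where "A2 = {X. (\<lambda>X. - f2 X) X - measure_pmf.expectation P (\<lambda>X. - f2 X) \<ge> s}"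
  have c: "1 / real m > 0" using mp by simp
  have P1: "measure_pmf.prob P A1 \<le> \<delta> / 2"
    unfolding A1_def P_def expo[symmetric]
    by (rule mcdiarmid[where B=1]) (use mp s in \<open>auto simp: f1_def tv_diff tv_bound\<close>)
  have P2: "measure_pmf.prob P A2 \<le> \<delta> / 2"
    unfolding A2_def P_def expo[symmetric]
  proof (rule mcdiarmid[where B="real m"])
    show "\<bar>- f2 (X(i := y)) - - f2 X\<bar> \<le> 1 / real m" if "i \<in> {..<m}" for X i y
      using phi_diff[of i m X y] that by (simp add: f2_def abs_minus_commute)
    show "\<bar>- f2 X\<bar> \<le> real m" for X using phi_bound[OF mp, of X] by (simp add: f2_def)
  qed (use mp s in auto)
  have sub: "UNIV - (A1 \<union> A2) \<subseteq> {X. f1 X \<le> f2 X + 3 * s}"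
  proof
    fix X assume "X \<in> UNIV - (A1 \<union> A2)"
    hence h1: "f1 X < measure_pmf.expectation P f1 + s"
      and h2: "- f2 X + measure_pmf.expectation P f2 < s"
      by (auto simp: A1_def A2_def)
    show "X \<in> {X. f1 X \<le> f2 X + 3 * s}" using h1 h2 EE s by simp
  qed
  have "1 - \<delta> \<le> 1 - measure_pmf.prob P (A1 \<union> A2)"
    using measure_Un_le[of A1 "measure_pmf P" A2] P1 P2 by simp
  also have "\<dots> = measure_pmf.prob P (UNIV - (A1 \<union> A2))"
    using measure_pmf.prob_compl[of "A1 \<union> A2" P] by simp
  also have "\<dots> \<le> measure_pmf.prob P {X. f1 X \<le> f2 X + 3 * s}"
    by (rule measure_pmf.finite_measure_mono[OF sub]) simp
  finally show "measure_pmf.prob (Pi_pmf {..<m} 0 (\<lambda>_. \<mu>))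
           {X. tv_dist (emp_measure m X) (pmf \<mu>)
               \<le> Phi m (emp_measure m X) + 3 * sqrt (ln (2 / \<delta>) / (2 * real m))} \<ge> 1 - \<delta>"
    unfolding P_def f1_def f2_def s_def .
qed


end
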